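(* Let $R$ be an (irreducible) ADE lattice of rank $n\ge 9$. Then $U\oplus R$ contains a sublattice isometric to $U\oplus E_8$.
   Context: Lattices are even, integral, non-degenerate. $U$ denotes the even unimodular hyperbolic lattice of rank 2 (Gram matrix $\begin{pmatrix}0&1\\1&0\end{pmatrix}$). ADE lattices $A_n$ ($n\ge1$), $D_n$ ($n\ge4$), $E_6,E_7,E_8$ are the negative definite root lattices whose Gram matrix, in the standard basis of roots $r_1,\dots,r_n$, is $-1$ times the Cartan matrix of the corresponding Dynkin diagram (so $r_i^2=-2$, $r_i.r_j=1$ if $i\ne j$ are adjacent, $0$ otherwise). *)

theory Defs
  imports Main
begin

text \<open>Lattices are modelled as Z^m (vectors nat => int, only indices < m matter)
together with an integral symmetric Gram matrix nat => nat => int.\<close>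

datatype ade_type = A nat | D nat | E nat

definition ade_valid :: "ade_type \<Rightarrow> bool" where
  "ade_valid t = (case t of A n \<Rightarrow> n \<ge> 1 | D n \<Rightarrow> n \<ge> 4 | E n \<Rightarrow> n \<in> {6,7,8})"

fun ade_rank :: "ade_type \<Rightarrow> nat" where
  "ade_rank (A n) = n"
| "ade_rank (D n) = n"
| "ade_rank (E n) = n"

fun dynkin_adj :: "ade_type \<Rightarrow> nat \<Rightarrow> nat \<Rightarrow> bool" where
  "dynkin_adj (A n) i j = (i < n \<and> j < n \<and> (i = j + 1 \<or> j = i + 1))"
| "dynkin_adj (D n) i j =
     ((i \<le> n - 2 \<and> j \<le> n - 2 \<and> (i = j + 1 \<or> j = i + 1))
      \<or> (i = n - 1 \<and> j = n - 3) \<or> (i = n - 3 \<and> j = n - 1))"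
| "dynkin_adj (E n) i j =
     ((i \<le> n - 2 \<and> j \<le> n - 2 \<and> (i = j + 1 \<or> j = i + 1))
      \<or> (i = n - 1 \<and> j = 2) \<or> (i = 2 \<and> j = n - 1))"

text \<open>Gram matrix of the negative definite root lattice: -1 times the Cartan matrix.\<close>
definition ade_gram :: "ade_type \<Rightarrow> nat \<Rightarrow> nat \<Rightarrow> int" where
  "ade_gram t i j = (if i = j then -2 else if dynkin_adj t i j then 1 else 0)"

definition U_plus :: "(nat \<Rightarrow> nat \<Rightarrow> int) \<Rightarrow> nat \<Rightarrow> nat \<Rightarrow> int" where
  "U_plus H i j =
     (if i < 2 \<and> j < 2 then (if i \<noteq> j then 1 else 0)
      else if 2 \<le> i \<and> 2 \<le> j then H (i - 2) (j - 2) else 0)"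

definition bil :: "nat \<Rightarrow> (nat \<Rightarrow> nat \<Rightarrow> int) \<Rightarrow> (nat \<Rightarrow> int) \<Rightarrow> (nat \<Rightarrow> int) \<Rightarrow> int" where
  "bil m G x y = (\<Sum>i<m. \<Sum>j<m. x i * G i j * y j)"

text \<open>The lattice (Z^m, G) contains a sublattice isometric to (Z^k, H):
 there are Z-linearly independent vectors e_0..e_(k-1) in Z^m whose Gram matrix is H
 (their Z-span is then the required sublattice).\<close>
definition has_sublattice_iso ::
  "nat \<Rightarrow> (nat \<Rightarrow> nat \<Rightarrow> int) \<Rightarrow> nat \<Rightarrow> (nat \<Rightarrow> nat \<Rightarrow> int) \<Rightarrow> bool" where
  "has_sublattice_iso m G k H =
    (\<exists>e :: nat \<Rightarrow> nat \<Rightarrow> int.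
       (\<forall>a<k. \<forall>i. i \<ge> m \<longrightarrow> e a i = 0) \<and>
       (\<forall>a<k. \<forall>b<k. bil m G (e a) (e b) = H a b) \<and>
       (\<forall>c :: nat \<Rightarrow> int. (\<forall>i<m. (\<Sum>a<k. c a * e a i) = 0) \<longrightarrow> (\<forall>a<k. c a = 0)))"

end

theory Submission
  imports Defs
begin

lemma sum_support:
  fixes f :: "nat \<Rightarrow> int"
  assumes "S \<subseteq> {..<m'}" "\<And>i. i \<notin> S \<Longrightarrow> f i = 0"
  shows "(\<Sum>i<m'. f i) = sum f S"
  using assms by (intro sum.mono_neutral_left[symmetric]) auto

lemma transfer:
  assumes inj: "inj_on p {..<m}" and pm: "\<forall>i<m. p i < m'"
    and gram: "\<forall>i<m. \<forall>j<m. G' (p i) (p j) = G i j"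
    and h: "has_sublattice_iso m G k H"
  shows "has_sublattice_iso m' G' k H"
proof -
  obtain e where e0: "\<forall>a<k. \<forall>i. i \<ge> m \<longrightarrow> e a i = 0"
    and eg: "\<forall>a<k. \<forall>b<k. bil m G (e a) (e b) = H a b"
    and ei: "\<forall>c :: nat \<Rightarrow> int. (\<forall>i<m. (\<Sum>a<k. c a * e a i) = 0) \<longrightarrow> (\<forall>a<k. c a = 0)"
    using h unfolding has_sublattice_iso_def by blast
  define S where "S = p ` {..<m}"
  define q where "q = the_inv_into {..<m} p"
  define e' where "e' a i = (if i \<in> S then e a (q i) else 0)" for a i
  have S: "S \<subseteq> {..<m'}" using pm unfolding S_def by auto
  have e'p: "e' a (p i) = e a i" if "i < m" for a i
    using that inj unfolding e'_def S_def q_def by (auto simp: the_inv_into_f_f)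
  have "bil m' G' (e' a) (e' b) = H a b" if "a < k" "b < k" for a b
  proof -
    have "bil m' G' (e' a) (e' b) = (\<Sum>i\<in>S. \<Sum>j\<in>S. e' a i * G' i j * e' b j)"
      unfolding bil_def
      apply (subst sum_support[OF S])
       apply (simp add: e'_def)
      apply (subst sum_support[OF S])
       apply (auto simp: e'_def)
      done
    also have "\<dots> = (\<Sum>i<m. \<Sum>j<m. e a i * G i j * e b j)"
      unfolding S_def using inj gram
      by (simp add: sum.reindex e'p)
    finally show ?thesis using eg that by (simp add: bil_def)
  qed
  moreover have "\<forall>a<k. \<forall>i. i \<ge> m' \<longrightarrow> e' a i = 0"
    using S unfolding e'_def by auto
  moreover have "\<forall>a<k. c a = 0" if "\<forall>i<m'. (\<Sum>a<k. c a * e' a i) = 0" for c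
  proof -
    have "\<forall>i<m. (\<Sum>a<k. c a * e a i) = 0"
    proof (intro allI impI)
      fix i assume "i < m"
      then have "(\<Sum>a<k. c a * e' a (p i)) = 0" using that pm by auto
      then show "(\<Sum>a<k. c a * e a i) = 0" using e'p[OF \<open>i<m\<close>] by simp
    qed
    then show ?thesis using ei by blast
  qed
  ultimately show ?thesis unfolding has_sublattice_iso_def by blast
qed


definition vA :: "nat \<Rightarrow> nat \<Rightarrow> int" where
 "vA a i = (if i < 11 then [[-3, -8, 1, 2, 3, 4, 5, 6, 7, 8, 2], [-3, -7, 1, 2, 3, 4, 5, 6, 7, 8, 3], [0, 0, 1, 0, 0, 0, 0, 0, 0, 0, 0], [0, 0, 0, 1, 0, 0, 0, 0, 0, 0, 0], [0, 0, 0, 0, 1, 0, 0, 0, 0, 0, 0], [0, 0, 0, 0, 0, 1, 0, 0, 0, 0, 0], [0, 0, 0, 0, 0, 0, 1, 0, 0, 0, 0], [0, 0, 0, 0, 0, 0, 0, 1, 0, 0, 0], [0, 0, 0, 0, 0, 0, 0, 0, 1, 0, 0], [1, 3, -1, -2, -3, -3, -3, -3, -3, -3, -1]] ! a ! i else 0)"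

lemma gramA: "\<forall>a\<in>{..<10}. \<forall>b\<in>{..<10}. bil 11 (U_plus (ade_gram (A 9))) (vA a) (vA b) = U_plus (ade_gram (E 8)) a b"
  unfolding bil_def vA_def U_plus_def ade_gram_def by code_simp

lemma indepA:
  fixes c :: "nat \<Rightarrow> int"
  assumes h: "\<forall>i<11. (\<Sum>a<10. c a * vA a i) = 0"
  shows "\<forall>a<10. c a = 0"
proof -
  have e: "\<And>i. i < 11 \<Longrightarrow> (\<Sum>a<10. c a * vA a i) = 0" using h by blast
  have "(\<Sum>a<10. c a * vA a 0) = 0" "(\<Sum>a<10. c a * vA a 1) = 0" "(\<Sum>a<10. c a * vA a 2) = 0"
       "(\<Sum>a<10. c a * vA a 3) = 0" "(\<Sum>a<10. c a * vA a 4) = 0" "(\<Sum>a<10. c a * vA a 5) = 0"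
       "(\<Sum>a<10. c a * vA a 6) = 0" "(\<Sum>a<10. c a * vA a 7) = 0" "(\<Sum>a<10. c a * vA a 8) = 0"
       "(\<Sum>a<10. c a * vA a 9) = 0" "(\<Sum>a<10. c a * vA a 10) = 0"
    by (rule e; simp)+
  then have "c 0 = 0 \<and> c 1 = 0 \<and> c 2 = 0 \<and> c 3 = 0 \<and> c 4 = 0 \<and> c 5 = 0 \<and> c 6 = 0 \<and> c 7 = 0 \<and> c 8 = 0 \<and> c 9 = 0"
    by (simp add: vA_def eval_nat_numeral)
  then show ?thesis by (auto simp: less_Suc_eq eval_nat_numeral)
qed

definition vD :: "nat \<Rightarrow> nat \<Rightarrow> int" where
 "vD a i = (if i < 11 then [[-2, -3, 1, 2, 3, 4, 5, 6, 7, 5, 3], [-3, -2, 1, 2, 3, 4, 5, 6, 7, 5, 3], [0, 0, 1, 0, 0, 0, 0, 0, 0, 0, 0], [0, 0, 0, 1, 0, 0, 0, 0, 0, 0, 0], [0, 0, 0, 0, 1, 0, 0, 0, 0, 0, 0], [0, 0, 0, 0, 0, 1, 0, 0, 0, 0, 0], [0, 0, 0, 0, 0, 0, 1, 0, 0, 0, 0], [0, 0, 0, 0, 0, 0, 0, 1, 0, 0, 0], [0, 0, 0, 0, 0, 0, 0, 0, 1, 0, 0], [1, 1, -1, -2, -3, -3, -3, -3, -3, -2, -1]] ! a ! i else 0)"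

lemma gramD: "\<forall>a\<in>{..<10}. \<forall>b\<in>{..<10}. bil 11 (U_plus (ade_gram (D 9))) (vD a) (vD b) = U_plus (ade_gram (E 8)) a b"
  unfolding bil_def vD_def U_plus_def ade_gram_def by code_simp

lemma indepD:
  fixes c :: "nat \<Rightarrow> int"
  assumes h: "\<forall>i<11. (\<Sum>a<10. c a * vD a i) = 0"
  shows "\<forall>a<10. c a = 0"
proof -
  have e: "\<And>i. i < 11 \<Longrightarrow> (\<Sum>a<10. c a * vD a i) = 0" using h by blast
  have "(\<Sum>a<10. c a * vD a 0) = 0" "(\<Sum>a<10. c a * vD a 1) = 0" "(\<Sum>a<10. c a * vD a 2) = 0"
       "(\<Sum>a<10. c a * vD a 3) = 0" "(\<Sum>a<10. c a * vD a 4) = 0" "(\<Sum>a<10. c a * vD a 5) = 0"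
       "(\<Sum>a<10. c a * vD a 6) = 0" "(\<Sum>a<10. c a * vD a 7) = 0" "(\<Sum>a<10. c a * vD a 8) = 0"
       "(\<Sum>a<10. c a * vD a 9) = 0" "(\<Sum>a<10. c a * vD a 10) = 0"
    by (rule e; simp)+
  then have "c 0 = 0 \<and> c 1 = 0 \<and> c 2 = 0 \<and> c 3 = 0 \<and> c 4 = 0 \<and> c 5 = 0 \<and> c 6 = 0 \<and> c 7 = 0 \<and> c 8 = 0 \<and> c 9 = 0"
    by (simp add: vD_def eval_nat_numeral)
  then show ?thesis by (auto simp: less_Suc_eq eval_nat_numeral)
qed

lemma isoA9: "has_sublattice_iso 11 (U_plus (ade_gram (A 9))) 10 (U_plus (ade_gram (E 8)))"
  unfolding has_sublattice_iso_def
proof (intro exI[of _ vA] conjI)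
  show "\<forall>a<10. \<forall>i. i \<ge> 11 \<longrightarrow> vA a i = 0" by (simp add: vA_def)
  show "\<forall>a<10. \<forall>b<10. bil 11 (U_plus (ade_gram (A 9))) (vA a) (vA b) = U_plus (ade_gram (E 8)) a b"
    using gramA by simp
  show "\<forall>c. (\<forall>i<11. (\<Sum>a<10. c a * vA a i) = 0) \<longrightarrow> (\<forall>a<10. c a = 0)"
    using indepA by blast
qed

lemma isoD9: "has_sublattice_iso 11 (U_plus (ade_gram (D 9))) 10 (U_plus (ade_gram (E 8)))"
  unfolding has_sublattice_iso_def
proof (intro exI[of _ vD] conjI)
  show "\<forall>a<10. \<forall>i. i \<ge> 11 \<longrightarrow> vD a i = 0" by (simp add: vD_def)
  show "\<forall>a<10. \<forall>b<10. bil 11 (U_plus (ade_gram (D 9))) (vD a) (vD b) = U_plus (ade_gram (E 8)) a b"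
    using gramD by simp
  show "\<forall>c. (\<forall>i<11. (\<Sum>a<10. c a * vD a i) = 0) \<longrightarrow> (\<forall>a<10. c a = 0)"
    using indepD by blast
qed


lemma adjD: assumes "n\<ge>9" "k < 9" "l < 9"
  shows "dynkin_adj (D n) (k + (n - 9)) (l + (n - 9)) = dynkin_adj (D 9) k l"
proof -
  have h: "\<And>k. k + (n - 9) \<le> n - 2 \<longleftrightarrow> k \<le> 7" "\<And>k. k + (n - 9) = n - 1 \<longleftrightarrow> k = 8"
    "\<And>k. k + (n - 9) = n - 3 \<longleftrightarrow> k = 6" "k + (n - 9) = l + (n - 9) + 1 \<longleftrightarrow> k = l + 1"
    "l + (n - 9) = k + (n - 9) + 1 \<longleftrightarrow> l = k + 1"
    using assms by arith+
  show ?thesis by (simp only: dynkin_adj.simps h) simp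
qed
lemma adjA: assumes "n\<ge>9" "k < 9" "l < 9"
  shows "dynkin_adj (A n) k l = dynkin_adj (A 9) k l"
  using assms by simp

lemma isoAn: assumes "n \<ge> 9"
  shows "has_sublattice_iso (n + 2) (U_plus (ade_gram (A n))) 10 (U_plus (ade_gram (E 8)))"
proof (rule transfer[OF _ _ _ isoA9, of id])
  show "inj_on id {..<11}" by simp
  show "\<forall>i<11. id i < n + 2" using assms by simp
  show "\<forall>i<11. \<forall>j<11. U_plus (ade_gram (A n)) (id i) (id j) = U_plus (ade_gram (A 9)) i j"
  proof (intro allI impI)
    fix i j :: nat assume ij: "i < 11" "j < 11"
    show "U_plus (ade_gram (A n)) (id i) (id j) = U_plus (ade_gram (A 9)) i j"
    proof (cases "i < 2"; cases "j < 2")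
      assume "\<not> i < 2" "\<not> j < 2"
      then have "i - 2 < 9" "j - 2 < 9" using ij by auto
      then have "ade_gram (A n) (i - 2) (j - 2) = ade_gram (A 9) (i - 2) (j - 2)"
        unfolding ade_gram_def using adjA[OF assms] by simp
      then show ?thesis using \<open>\<not> i < 2\<close> \<open>\<not> j < 2\<close>
        unfolding U_plus_def by simp
    qed (auto simp: U_plus_def)
  qed
qed

lemma isoDn: assumes "n \<ge> 9"
  shows "has_sublattice_iso (n + 2) (U_plus (ade_gram (D n))) 10 (U_plus (ade_gram (E 8)))"
proof (rule transfer[OF _ _ _ isoD9, of "\<lambda>i. if i < 2 then i else i + (n - 9)"])
  show "inj_on (\<lambda>i. if i < 2 then i else i + (n - 9)) {..<11}"
    by (auto simp: inj_on_def split: if_splits)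
  show "\<forall>i<11. (if i < 2 then i else i + (n - 9)) < n + 2" using assms by auto
  show "\<forall>i<11. \<forall>j<11. U_plus (ade_gram (D n)) (if i < 2 then i else i + (n - 9)) (if j < 2 then j else j + (n - 9)) = U_plus (ade_gram (D 9)) i j"
  proof (intro allI impI)
    fix i j :: nat assume ij: "i < 11" "j < 11"
    have g: "ade_gram (D n) (k + (n - 9)) (l + (n - 9)) = ade_gram (D 9) k l"
      if "k < 9" "l < 9" for k l
      using adjD[OF assms that] unfolding ade_gram_def by simp
    show "U_plus (ade_gram (D n)) (if i < 2 then i else i + (n - 9)) (if j < 2 then j else j + (n - 9)) = U_plus (ade_gram (D 9)) i j"
    proof (cases "i < 2"; cases "j < 2")
      assume "\<not> i < 2" "\<not> j < 2"
      then have e1: "i + (n - 9) - 2 = (i - 2) + (n - 9)" and e2: "j + (n - 9) - 2 = (j - 2) + (n - 9)"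
        and "i - 2 < 9" "j - 2 < 9" using ij by auto
      then have "ade_gram (D n) (i + (n - 9) - 2) (j + (n - 9) - 2) = ade_gram (D 9) (i - 2) (j - 2)"
        unfolding e1 e2 by (intro g)
      then show ?thesis using \<open>\<not> i < 2\<close> \<open>\<not> j < 2\<close>
        unfolding U_plus_def by simp
    qed (auto simp: U_plus_def)
  qed
qed

theorem proposition2p1:
  fixes R :: ade_type
  assumes "ade_valid R" and "ade_rank R \<ge> 9"
  shows "has_sublattice_iso (ade_rank R + 2) (U_plus (ade_gram R)) 10 (U_plus (ade_gram (E 8)))"
proof (cases R)
  case (A n) then show ?thesis using assms isoAn by simp
next
  case (D n) then show ?thesis using assms isoDn by simp
next
  case (E n) then show ?thesis using assms by (auto simp: ade_valid_def)
qed

end
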